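(* Under SC decoding, the block erasure threshold of the product code sequence defined by the component code sets $\mathscr{C}^{[m]}=\{\mathcal{C}_1,\mathcal{C}_2,\ldots,\mathcal{C}_m\}$, where $\mathcal{C}_i$, $i=1,\dots,m$, are $(m,m-1)$ SPC codes, is zero.
   Context: For each $m$, let $\mathcal{C}^{[m]}$ be the $m$-dimensional product code whose $m$ component codes are all $(m,m-1)$ single parity-check (SPC) codes, i.e., an $(m^m,(m-1)^m,2^m)$ code with rate $(1-1/m)^m\to e^{-1}$. Transmission is over the binary erasure channel BEC($\epsilon_{\mathrm{ch}}$), and decoding uses successive cancellation (SC) decoding (information bits decoded sequentially, each using the previous decisions, with likelihoods computed recursively across the dimensions starting from the first component code), outputting an erasure on ties. The SC block erasure threshold of the sequence is $\epsilon^\star=\sup_{\epsilon_{\mathrm{ch}}\in[0,1)}\{\epsilon_{\mathrm{ch}}:\lim_{m\to\infty}P_{\mathrm{SC}}(\mathcal{C}^{[m]})=0\}$, where $P_{\mathrm{SC}}(\mathcal{C}^{[m]})$ is the block error probability of $\mathcal{C}^{[m]}$ under SC decoding. *)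

theory Defs
  imports Complex_Main
begin

text \<open>
  The m-dimensional product code whose components are all the (m,m-1) single
  parity-check code with generator matrix [I_{m-1} | 1] (last coordinate is the
  parity).  A j-dimensional message is a function on {0..<(m-1)^j}, a codeword a
  function on {0..<m^j}.  Index decomposition: the outermost (first) component
  acts on index p div m^j (codeword) / q div (m-1)^j (message).
\<close>

primrec spc_enc :: "nat \<Rightarrow> nat \<Rightarrow> (nat \<Rightarrow> bool) \<Rightarrow> (nat \<Rightarrow> bool)" where
  "spc_enc m 0 u = (\<lambda>p. u 0)"
| "spc_enc m (Suc j) u =
     (\<lambda>p. let c = p div m ^ j; d = p mod m ^ j;
              w = (\<lambda>a. spc_enc m j (\<lambda>b. u (a * (m - 1) ^ j + b)))
          in if c < m - 1 then w c d
             else odd (card {a. a < m - 1 \<and> w a d}))"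

text \<open>
  BEC observations are \<open>bool option\<close> (None = erasure).  Successive cancellation
  message for outer block a (0 \<le> a < m-1) at inner coordinate d, given the
  already decoded message blocks U c for c < a (re-encoded via spc_enc).
  It is the BEC specialisation of the SC likelihood: the channel value of
  block a if not erased; otherwise the parity-check estimate if the parity
  position and all later (not yet decoded) systematic blocks are unerased;
  otherwise an erasure (tie).
\<close>

definition spc_sc_msg ::
  "nat \<Rightarrow> nat \<Rightarrow> (nat \<Rightarrow> bool option) \<Rightarrow> (nat \<Rightarrow> nat \<Rightarrow> bool) \<Rightarrow> nat \<Rightarrow> (nat \<Rightarrow> bool option)" where
  "spc_sc_msg m j y U a =
     (\<lambda>d. let yv = (\<lambda>c. y (c * m ^ j + d));
              val = (\<lambda>c. if c < a then spc_enc m j (U c) d else the (yv c))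
          in if yv a \<noteq> None then yv a
             else if (\<forall>c. a < c \<and> c < m \<longrightarrow> yv c \<noteq> None)
               then Some (odd (card {c. c < m \<and> c \<noteq> a \<and> val c}))
             else None)"

text \<open>
  SC decoder (None = an erasure was output on some information bit).
  Blocks a = 0, ..., m-2 of the outermost component are decoded in order, each
  recursively by the (j)-dimensional SC decoder.
\<close>

primrec spc_sc_dec :: "nat \<Rightarrow> nat \<Rightarrow> (nat \<Rightarrow> bool option) \<Rightarrow> (nat \<Rightarrow> bool) option" where
  "spc_sc_dec m 0 y = (case y 0 of None \<Rightarrow> None | Some b \<Rightarrow> Some (\<lambda>_. b))"
| "spc_sc_dec m (Suc j) y =
     map_option (\<lambda>U q. U (q div (m - 1) ^ j) (q mod (m - 1) ^ j))
       (fold (\<lambda>a acc. case acc of None \<Rightarrow> None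
                 | Some U \<Rightarrow> (case spc_sc_dec m j (spc_sc_msg m j y U a) of
                               None \<Rightarrow> None
                             | Some ua \<Rightarrow> Some (U(a := ua))))
             [0..<m - 1] (Some (\<lambda>_ _. False)))"

text \<open>
  Block error probability of the code C^[m] under SC decoding over BEC(eps):
  averaged over uniformly random messages (subsets S of {0..<(m-1)^m} give the
  message bits), summing over erasure patterns E of the m^m positions.
\<close>

definition P_SC :: "nat \<Rightarrow> real \<Rightarrow> real" where
  "P_SC m eps =
     (let K = (m - 1) ^ m; N = m ^ m in
      (1 / 2 ^ K) *
      (\<Sum>S\<in>Pow {..<K}. \<Sum>E\<in>Pow {..<N}.
          eps ^ card E * (1 - eps) ^ (N - card E) *
          (let u = (\<lambda>q. q \<in> S);
               y = (\<lambda>p. if p \<in> E then None else Some (spc_enc m m u p))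
           in if (\<exists>f. spc_sc_dec m m y = Some f \<and> (\<forall>q<K. f q = u q)) then 0 else 1)))"

definition SC_threshold :: "(nat \<Rightarrow> real \<Rightarrow> real) \<Rightarrow> real" where
  "SC_threshold P = Sup {eps. 0 \<le> eps \<and> eps < 1 \<and> (\<lambda>m. P m eps) \<longlonglongrightarrow> 0}"

end

theory Submission
  imports Defs
begin

definition W :: "(nat \<Rightarrow> real) \<Rightarrow> nat set \<Rightarrow> nat set \<Rightarrow> real" where
  "W p A E = (\<Prod>i\<in>A. if i \<in> E then p i else 1 - p i)"

definition Pr :: "(nat \<Rightarrow> real) \<Rightarrow> nat set \<Rightarrow> (nat set \<Rightarrow> bool) \<Rightarrow> real" where
  "Pr p A Q = (\<Sum>E\<in>Pow A. W p A E * of_bool (Q E))"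

lemma sum_Pow_Un:
  assumes "finite X" "finite Y" "X \<inter> Y = {}"
  shows "(\<Sum>E\<in>Pow (X\<union>Y). f E) = (\<Sum>E1\<in>Pow X. \<Sum>E2\<in>Pow Y. f (E1 \<union> E2))"
proof -
  have b: "bij_betw (\<lambda>(E1,E2). E1 \<union> E2) (Pow X \<times> Pow Y) (Pow (X\<union>Y))"
    by (rule bij_betw_byWitness[where f'="\<lambda>E. (E\<inter>X, E\<inter>Y)"]) (use assms in auto)
  have "(\<Sum>E\<in>Pow (X\<union>Y). f E) = (\<Sum>z\<in>Pow X \<times> Pow Y. f ((\<lambda>(E1,E2). E1\<union>E2) z))"
    using sum.reindex_bij_betw[OF b, of f] by simp
  also have "\<dots> = (\<Sum>E1\<in>Pow X. \<Sum>E2\<in>Pow Y. f (E1 \<union> E2))"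
    by (simp add: sum.cartesian_product split_def)
  finally show ?thesis .
qed

lemma W_Un:
  assumes "finite X" "finite Y" "X \<inter> Y = {}" "E1 \<subseteq> X" "E2 \<subseteq> Y"
  shows "W p (X\<union>Y) (E1 \<union> E2) = W p X E1 * W p Y E2"
proof -
  have "W p (X\<union>Y) (E1 \<union> E2) = (\<Prod>i\<in>X. if i \<in> E1 \<union> E2 then p i else 1 - p i) *
      (\<Prod>i\<in>Y. if i \<in> E1 \<union> E2 then p i else 1 - p i)"
    unfolding W_def using assms by (simp add: prod.union_disjoint)
  also have "\<dots> = W p X E1 * W p Y E2"
    unfolding W_def using assms
    by (intro arg_cong2[where f="(*)"] prod.cong) auto
  finally show ?thesis .
qed

lemma W_sum1: "finite A \<Longrightarrow> (\<Sum>E\<in>Pow A. W p A E) = 1"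
proof (induction A rule: finite_induct)
  case empty
  then show ?case by (simp add: W_def)
next
  case (insert a A)
  have "(\<Sum>E\<in>Pow ({a} \<union> A). W p ({a} \<union> A) E) = (\<Sum>E1\<in>Pow {a}. \<Sum>E2\<in>Pow A. W p ({a} \<union> A) (E1 \<union> E2))"
    using insert by (intro sum_Pow_Un) auto
  also have "\<dots> = (\<Sum>E1\<in>Pow {a}. \<Sum>E2\<in>Pow A. W p {a} E1 * W p A E2)"
    using insert by (intro sum.cong refl W_Un) auto
  also have "\<dots> = (\<Sum>E1\<in>Pow {a}. W p {a} E1)"
    by (simp add: sum_distrib_left[symmetric] insert.IH)
  also have "\<dots> = 1" by (simp add: Pow_singleton_iff W_def Pow_insert)
  finally show ?case by simp
qed

lemma Pr_split_one:
  assumes "finite A" "a \<notin> A"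
  shows "Pr q (insert a A) Q = q a * Pr q A (\<lambda>F. Q (insert a F)) + (1 - q a) * Pr q A Q"
proof -
  have "Pr q ({a} \<union> A) Q = (\<Sum>E1\<in>Pow {a}. \<Sum>E2\<in>Pow A. W q ({a} \<union> A) (E1 \<union> E2) * of_bool (Q (E1 \<union> E2)))"
    unfolding Pr_def using assms by (intro sum_Pow_Un) auto
  also have "\<dots> = (\<Sum>E1\<in>Pow {a}. \<Sum>E2\<in>Pow A. W q {a} E1 * (W q A E2 * of_bool (Q (E1 \<union> E2))))"
    using assms by (intro sum.cong refl) (subst W_Un, auto)
  also have "\<dots> = (\<Sum>E1\<in>Pow {a}. W q {a} E1 * Pr q A (\<lambda>F. Q (E1 \<union> F)))"
    by (simp add: sum_distrib_left Pr_def)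
  also have "\<dots> = q a * Pr q A (\<lambda>F. Q (insert a F)) + (1 - q a) * Pr q A Q"
    by (simp add: Pow_insert W_def)
  finally show ?thesis by simp
qed

lemma Pr_blocks:
  assumes "finite A" "\<forall>d\<in>A. finite (B d)" "\<forall>d\<in>A. \<forall>d'\<in>A. d \<noteq> d' \<longrightarrow> B d \<inter> B d' = {}"
    "\<forall>d\<in>A. Pr p (B d) (h d) = q d"
  shows "Pr p (\<Union>d\<in>A. B d) (\<lambda>E. Q {d\<in>A. h d (E \<inter> B d)}) = Pr q A Q"
  using assms
proof (induction A arbitrary: Q rule: finite_induct)
  case empty
  then show ?case by (simp add: Pr_def W_def)
next
  case (insert a A)
  define U where "U = (\<Union>d\<in>A. B d)"
  have finU: "finite U" "finite (B a)" using insert by (auto simp: U_def)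
  have disj: "B a \<inter> U = {}" using insert by (auto simp: U_def)
  define Q' where "Q' = (\<lambda>E1 F. Q (if h a E1 then insert a F else F))"
  have IH: "Pr p U (\<lambda>E. Q' E1 {d\<in>A. h d (E \<inter> B d)}) = Pr q A (Q' E1)" for E1
    unfolding U_def using insert by (intro insert.IH) auto
  have seteq: "{d\<in>insert a A. h d ((E1 \<union> E2) \<inter> B d)} =
      (if h a E1 then insert a {d\<in>A. h d (E2 \<inter> B d)} else {d\<in>A. h d (E2 \<inter> B d)})"
    if "E1 \<subseteq> B a" "E2 \<subseteq> U" for E1 E2
  proof -
    have 1: "(E1 \<union> E2) \<inter> B a = E1" using that disj by auto
    have 2: "(E1 \<union> E2) \<inter> B d = E2 \<inter> B d" if "d \<in> A" for d
    proof -
      have "d \<noteq> a" using that insert by auto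
      then have "B a \<inter> B d = {}" using insert that by auto
      then show ?thesis using \<open>E1 \<subseteq> B a\<close> by auto
    qed
    show ?thesis using 1 2 by auto
  qed
  have "Pr p (\<Union>d\<in>insert a A. B d) (\<lambda>E. Q {d\<in>insert a A. h d (E \<inter> B d)})
     = Pr p (B a \<union> U) (\<lambda>E. Q {d\<in>insert a A. h d (E \<inter> B d)})" by (simp add: U_def)
  also have "\<dots> = (\<Sum>E1\<in>Pow (B a). \<Sum>E2\<in>Pow U. W p (B a \<union> U) (E1 \<union> E2) *
       of_bool (Q {d\<in>insert a A. h d ((E1 \<union> E2) \<inter> B d)}))"
    unfolding Pr_def using finU disj by (intro sum_Pow_Un) auto
  also have "\<dots> = (\<Sum>E1\<in>Pow (B a). \<Sum>E2\<in>Pow U. W p (B a) E1 *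
       (W p U E2 * of_bool (Q' E1 {d\<in>A. h d (E2 \<inter> B d)})))"
  proof (intro sum.cong refl)
    fix E1 E2 assume e: "E1 \<in> Pow (B a)" "E2 \<in> Pow U"
    show "W p (B a \<union> U) (E1 \<union> E2) * of_bool (Q {d\<in>insert a A. h d ((E1 \<union> E2) \<inter> B d)}) =
       W p (B a) E1 * (W p U E2 * of_bool (Q' E1 {d\<in>A. h d (E2 \<inter> B d)}))"
      unfolding seteq[of E1 E2, OF e[simplified]] W_Un[OF finU(2) finU(1) disj e[simplified]] Q'_def
      by simp
  qed
  also have "\<dots> = (\<Sum>E1\<in>Pow (B a). W p (B a) E1 * Pr p U (\<lambda>E. Q' E1 {d\<in>A. h d (E \<inter> B d)}))"
    by (simp add: sum_distrib_left Pr_def)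
  also have "\<dots> = (\<Sum>E1\<in>Pow (B a). W p (B a) E1 * Pr q A (Q' E1))"
    by (simp add: IH)
  also have "\<dots> = (\<Sum>E1\<in>Pow (B a). W p (B a) E1 * (Pr q A Q +
       of_bool (h a E1) * (Pr q A (\<lambda>F. Q (insert a F)) - Pr q A Q)))"
    by (intro sum.cong refl) (simp add: Q'_def)
  also have "\<dots> = Pr q A Q * (\<Sum>E1\<in>Pow (B a). W p (B a) E1) +
       (\<Sum>E1\<in>Pow (B a). W p (B a) E1 * of_bool (h a E1)) * (Pr q A (\<lambda>F. Q (insert a F)) - Pr q A Q)"
    by (simp add: algebra_simps sum.distrib sum_subtractf sum_distrib_left sum_distrib_right)
  also have "\<dots> = Pr q A Q + q a * (Pr q A (\<lambda>F. Q (insert a F)) - Pr q A Q)"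
    using insert finU by (simp add: W_sum1 Pr_def[symmetric])
  also have "\<dots> = Pr q (insert a A) Q"
    using insert by (simp add: Pr_split_one algebra_simps)
  finally show ?case .
qed

lemma Pr_cong: "(\<And>E. E \<subseteq> A \<Longrightarrow> Q E = Q' E) \<Longrightarrow> Pr p A Q = Pr p A Q'"
  unfolding Pr_def by (intro sum.cong refl) auto

lemma Pr_nonempty:
  assumes "finite A"
  shows "Pr p A (\<lambda>F. F \<noteq> {}) = 1 - W p A {}"
proof -
  have "Pr p A (\<lambda>F. F \<noteq> {}) = (\<Sum>E\<in>Pow A. W p A E - (if E = {} then W p A E else 0))"
    unfolding Pr_def by (intro sum.cong refl) auto
  also have "\<dots> = 1 - W p A {}"
    using assms by (simp add: sum_subtractf W_sum1 sum.delta')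
  finally show ?thesis .
qed

lemma W_empty_const: "finite A \<Longrightarrow> W (\<lambda>_. e) A {} = (1 - e) ^ card A"
  by (simp add: W_def)

lemma Pr_first_and_some:
  assumes "finite R" "a \<notin> R"
  shows "Pr (\<lambda>_. e) (insert a R) (\<lambda>E. a \<in> E \<and> E \<inter> R \<noteq> {}) = e * (1 - (1 - e) ^ card R)"
proof -
  have "Pr (\<lambda>_. e) (insert a R) (\<lambda>E. a \<in> E \<and> E \<inter> R \<noteq> {}) =
     e * Pr (\<lambda>_. e) R (\<lambda>F. a \<in> insert a F \<and> insert a F \<inter> R \<noteq> {}) +
     (1 - e) * Pr (\<lambda>_. e) R (\<lambda>F. a \<in> F \<and> F \<inter> R \<noteq> {})"
    using assms by (simp add: Pr_split_one)
  also have "Pr (\<lambda>_. e) R (\<lambda>F. a \<in> insert a F \<and> insert a F \<inter> R \<noteq> {}) = Pr (\<lambda>_. e) R (\<lambda>F. F \<noteq> {})"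
    using assms by (intro Pr_cong) auto
  also have "Pr (\<lambda>_. e) R (\<lambda>F. a \<in> F \<and> F \<inter> R \<noteq> {}) = Pr (\<lambda>_. e) R (\<lambda>F. False)"
    using assms by (intro Pr_cong) auto
  also have "Pr (\<lambda>_. e) R (\<lambda>F. False) = 0" by (simp add: Pr_def)
  finally show ?thesis using assms by (simp add: Pr_nonempty W_empty_const)
qed

primrec Cev :: "nat \<Rightarrow> nat \<Rightarrow> (nat \<Rightarrow> bool) \<Rightarrow> bool" where
  "Cev m 0 Er = Er 0"
| "Cev m (Suc j) Er = Cev m j (\<lambda>d. Er d \<and> (\<exists>c. 0 < c \<and> c < m \<and> Er (c * m ^ j + d)))"

lemma digit_lt:
  fixes m c p j :: nat
  assumes "c < m" "p < m ^ j"
  shows "c * m ^ j + p < m ^ Suc j"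
proof -
  have "c * m ^ j + p < c * m ^ j + m ^ j" using assms by simp
  also have "\<dots> = (c + 1) * m ^ j" by simp
  also have "\<dots> \<le> m * m ^ j" using assms(1) by (intro mult_le_mono1) simp
  finally show ?thesis by simp
qed

lemma Cev_cong: "0 < m \<Longrightarrow> (\<forall>p<m ^ j. Er p = Er2 p) \<Longrightarrow> Cev m j Er = Cev m j Er2"
proof (induction j arbitrary: Er Er2)
  case 0
  then show ?case by simp
next
  case (Suc j)
  have "\<forall>p<m ^ j. (Er p \<and> (\<exists>c. 0 < c \<and> c < m \<and> Er (c * m ^ j + p))) =
                   (Er2 p \<and> (\<exists>c. 0 < c \<and> c < m \<and> Er2 (c * m ^ j + p)))"
  proof (intro allI impI)
    fix p assume p: "p < m ^ j"
    have "p < m ^ Suc j" using p digit_lt[of 0 m p j] Suc.prems(1) by simp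
    moreover have "\<And>c. c < m \<Longrightarrow> Er (c * m ^ j + p) = Er2 (c * m ^ j + p)"
      using Suc.prems(2) digit_lt p by blast
    ultimately show "(Er p \<and> (\<exists>c. 0 < c \<and> c < m \<and> Er (c * m ^ j + p))) =
                   (Er2 p \<and> (\<exists>c. 0 < c \<and> c < m \<and> Er2 (c * m ^ j + p)))"
      using Suc.prems(2) by auto
  qed
  then show ?case using Suc.IH Suc.prems(1) by simp
qed

definition gfun :: "nat \<Rightarrow> real \<Rightarrow> real" where
  "gfun m x = x * (1 - (1 - x) ^ (m - 1))"

lemma Pr_Cev:
  assumes m: "0 < m"
  shows "Pr (\<lambda>_. e) {..<m ^ j} (\<lambda>E. Cev m j (\<lambda>p. p \<in> E)) = (gfun m ^^ j) e"
proof (induction j arbitrary: e)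
  case 0
  have "Pow {0::nat} = {{}, {0}}" by (auto simp: Pow_singleton_iff)
  then show ?case by (simp add: Pr_def W_def lessThan_Suc)
next
  case (Suc j)
  define A where "A = {..<m ^ j}"
  define B where "B = (\<lambda>d. {c * m ^ j + d |c. c < m})"
  define R where "R = (\<lambda>d. (\<lambda>c. c * m ^ j + d) ` {0<..<m})"
  define h where "h = (\<lambda>d E. d \<in> E \<and> (\<exists>c. 0 < c \<and> c < m \<and> c * m ^ j + d \<in> E))"
  have mj: "m ^ j > 0" using m by simp
  have BR: "B d = insert d (R d)" for d
    unfolding B_def R_def using m
  proof (intro equalityI subsetI)
    fix x assume "x \<in> {c * m ^ j + d |c. c < m}"
    then obtain c where "x = c * m ^ j + d" "c < m" by blast
    then show "x \<in> insert d ((\<lambda>c. c * m ^ j + d) ` {0<..<m})" by (cases "c = 0") auto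
  qed auto
  have dR: "d \<notin> R d" for d unfolding R_def using mj by auto
  have cardR: "card (R d) = m - 1" for d
  proof -
    have "inj_on (\<lambda>c. c * m ^ j + d) {0<..<m}" using mj by (auto simp: inj_on_def)
    then show ?thesis unfolding R_def by (simp add: card_image)
  qed
  have finR: "finite (R d)" for d unfolding R_def by simp
  have hR: "h d E = (d \<in> E \<and> E \<inter> R d \<noteq> {})" for d E unfolding h_def R_def by auto
  have q: "Pr (\<lambda>_. e) (B d) (h d) = gfun m e" for d
    unfolding BR hR using Pr_first_and_some[OF finR dR, of e] by (simp add: cardR gfun_def)
  have U: "{..<m ^ Suc j} = (\<Union>d\<in>A. B d)"
  proof (intro equalityI subsetI)
    fix p assume "p \<in> {..<m ^ Suc j}"
    then have "p div m ^ j < m" by (simp add: less_mult_imp_div_less mult.commute)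
    moreover have "p = (p div m ^ j) * m ^ j + p mod m ^ j" by (simp add: div_mult_mod_eq)
    moreover have "p mod m ^ j \<in> A" using mj by (simp add: A_def)
    ultimately show "p \<in> (\<Union>d\<in>A. B d)" unfolding B_def by blast
  next
    fix p assume "p \<in> (\<Union>d\<in>A. B d)"
    then show "p \<in> {..<m ^ Suc j}" unfolding A_def B_def using digit_lt by auto
  qed
  have disj: "\<forall>d\<in>A. \<forall>d'\<in>A. d \<noteq> d' \<longrightarrow> B d \<inter> B d' = {}"
  proof (intro ballI impI)
    fix d d' assume d: "d \<in> A" "d' \<in> A" "d \<noteq> d'"
    show "B d \<inter> B d' = {}"
    proof (rule ccontr)
      assume "B d \<inter> B d' \<noteq> {}"
      then obtain c c' where "c * m ^ j + d = c' * m ^ j + d'" unfolding B_def by blast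
      then have "(c * m ^ j + d) mod m ^ j = (c' * m ^ j + d') mod m ^ j" by simp
      then show False using d by (simp add: A_def)
    qed
  qed
  have finB: "\<forall>d\<in>A. finite (B d)" using BR finR by simp
  have "Pr (\<lambda>_. e) {..<m ^ Suc j} (\<lambda>E. Cev m (Suc j) (\<lambda>p. p \<in> E)) =
        Pr (\<lambda>_. e) (\<Union>d\<in>A. B d) (\<lambda>E. Cev m j (\<lambda>p. p \<in> {d\<in>A. h d (E \<inter> B d)}))"
  proof -
    have "Cev m (Suc j) (\<lambda>p. p \<in> E) = Cev m j (\<lambda>p. p \<in> {d\<in>A. h d (E \<inter> B d)})" for E
    proof -
      have "\<forall>p<m ^ j. (p \<in> E \<and> (\<exists>c. 0 < c \<and> c < m \<and> c * m ^ j + p \<in> E)) =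
              (p \<in> {d\<in>A. h d (E \<inter> B d)})"
      proof -
        have inB: "c * m ^ j + p \<in> B p" if "c < m" for c p unfolding B_def using that by blast
        have "p \<in> B p" for p using inB[of 0 p] m by simp
        then show ?thesis unfolding A_def h_def using inB by auto
      qed
      then show ?thesis using Cev_cong[OF m] by simp
    qed
    then show ?thesis using U by simp
  qed
  also have "\<dots> = Pr (\<lambda>_. gfun m e) A (\<lambda>F. Cev m j (\<lambda>p. p \<in> F))"
    by (rule Pr_blocks) (use finB disj q in \<open>auto simp: A_def\<close>)
  also have "\<dots> = (gfun m ^^ Suc j) e"
  proof -
    have "(gfun m ^^ Suc j) e = (gfun m ^^ j) (gfun m e)" by (simp only: funpow_Suc_right o_def)
    then show ?thesis using Suc.IH by (simp add: A_def)
  qed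
  finally show ?case .
qed

lemma fold_None:
  "fold (\<lambda>a acc. case acc of None \<Rightarrow> None | Some U \<Rightarrow> G a U) xs None = None"
  by (induction xs) auto

lemma dec_None:
  assumes m: "2 \<le> m"
  shows "Cev m j (\<lambda>p. y p = None) \<Longrightarrow> spc_sc_dec m j y = None"
proof (induction j arbitrary: y)
  case 0
  then show ?case by simp
next
  case (Suc j)
  define U0 :: "nat \<Rightarrow> nat \<Rightarrow> bool" where "U0 = (\<lambda>_ _. False)"
  have msg: "(\<lambda>d. spc_sc_msg m j y U0 0 d = None) =
      (\<lambda>d. y d = None \<and> (\<exists>c. 0 < c \<and> c < m \<and> y (c * m ^ j + d) = None))"
    by (rule ext) (auto simp: spc_sc_msg_def Let_def)
  have "spc_sc_dec m j (spc_sc_msg m j y U0 0) = None"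
    using Suc.IH[of "spc_sc_msg m j y U0 0"] Suc.prems by (simp add: msg)
  moreover have "[0..<m - 1] = 0 # [1..<m - 1]" using m by (simp add: upt_conv_Cons)
  ultimately show ?case by (simp add: fold_None U0_def)
qed

lemma dec_correct:
  "(\<forall>p<m ^ j. y p = Some (spc_enc m j u p)) \<Longrightarrow>
   \<exists>f. spc_sc_dec m j y = Some f \<and> (\<forall>q<(m - 1) ^ j. f q = u q)"
proof (induction j arbitrary: y u)
  case 0
  then show ?case by simp
next
  case (Suc j)
  note yS = Suc.prems
  note IHj = Suc.IH
  define F where "F = (\<lambda>a acc. case acc of None \<Rightarrow> None
                 | Some U \<Rightarrow> (case spc_sc_dec m j (spc_sc_msg m j y U a) of
                               None \<Rightarrow> None
                             | Some ua \<Rightarrow> Some (U(a := ua))))"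
  have inv: "k \<le> m - 1 \<Longrightarrow> \<exists>U. fold F [0..<k] (Some (\<lambda>_ _. False)) = Some U \<and>
      (\<forall>a<k. \<forall>q<(m - 1) ^ j. U a q = u (a * (m - 1) ^ j + q))" for k
  proof (induction k)
    case 0
    then show ?case by simp
  next
    case (Suc k)
    then obtain U where U: "fold F [0..<k] (Some (\<lambda>_ _. False)) = Some U"
      "\<forall>a<k. \<forall>q<(m - 1) ^ j. U a q = u (a * (m - 1) ^ j + q)" by auto
    have km: "k < m - 1" using Suc.prems by simp
    have "\<forall>d<m ^ j. spc_sc_msg m j y U k d = Some (spc_enc m j (\<lambda>b. u (k * (m - 1) ^ j + b)) d)"
    proof (intro allI impI)
      fix d assume d: "d < m ^ j"
      have lt: "k * m ^ j + d < m ^ Suc j" using digit_lt[of k m d j] km d by simp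
      have dv: "(k * m ^ j + d) div m ^ j = k" and md: "(k * m ^ j + d) mod m ^ j = d"
      proof -
        have pos: "m ^ j > 0" using d by linarith
        show "(k * m ^ j + d) div m ^ j = k" using pos d by (simp add: div_add1_eq)
        show "(k * m ^ j + d) mod m ^ j = d" using pos d by simp
      qed
      have "y (k * m ^ j + d) = Some (spc_enc m (Suc j) u (k * m ^ j + d))"
        using yS lt by blast
      also have "\<dots> = Some (spc_enc m j (\<lambda>b. u (k * (m - 1) ^ j + b)) d)"
        using km d by (simp add: Let_def dv md)
      finally show "spc_sc_msg m j y U k d = Some (spc_enc m j (\<lambda>b. u (k * (m - 1) ^ j + b)) d)"
        by (simp add: spc_sc_msg_def Let_def)
    qed
    then obtain ua where ua: "spc_sc_dec m j (spc_sc_msg m j y U k) = Some ua"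
      "\<forall>q<(m - 1) ^ j. ua q = u (k * (m - 1) ^ j + q)"
      using IHj by blast
    have "fold F [0..<Suc k] (Some (\<lambda>_ _. False)) = Some (U(k := ua))"
      using U ua by (simp add: F_def)
    moreover have "\<forall>a<Suc k. \<forall>q<(m - 1) ^ j. (U(k := ua)) a q = u (a * (m - 1) ^ j + q)"
      using U ua by (auto simp: less_Suc_eq)
    ultimately show ?case by blast
  qed
  obtain U where U: "fold F [0..<m - 1] (Some (\<lambda>_ _. False)) = Some U"
      "\<forall>a<m - 1. \<forall>q<(m - 1) ^ j. U a q = u (a * (m - 1) ^ j + q)" using inv[of "m - 1"] by auto
  have "spc_sc_dec m (Suc j) y = Some (\<lambda>q. U (q div (m - 1) ^ j) (q mod (m - 1) ^ j))"
    using U(1) by (simp add: F_def)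
  moreover have "\<forall>q<(m - 1) ^ Suc j. U (q div (m - 1) ^ j) (q mod (m - 1) ^ j) = u q"
  proof (intro allI impI)
    fix q assume q: "q < (m - 1) ^ Suc j"
    then have pos: "(m - 1) ^ j > 0" by (cases "(m - 1) ^ j = 0") auto
    have "q div (m - 1) ^ j < m - 1" using q by (simp add: less_mult_imp_div_less mult.commute)
    moreover have "q mod (m - 1) ^ j < (m - 1) ^ j" using pos by simp
    ultimately have "U (q div (m - 1) ^ j) (q mod (m - 1) ^ j) =
        u (q div (m - 1) ^ j * (m - 1) ^ j + q mod (m - 1) ^ j)" using U(2) by blast
    then show "U (q div (m - 1) ^ j) (q mod (m - 1) ^ j) = u q" by (simp add: div_mult_mod_eq)
  qed
  ultimately show ?case by blast
qed

lemma W_eq: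
  assumes "finite A" "E \<subseteq> A"
  shows "W (\<lambda>_. e) A E = e ^ card E * (1 - e) ^ (card A - card E)"
proof -
  have "W (\<lambda>_. e) A E = (\<Prod>i\<in>A \<inter> {x. x \<in> E}. e) * (\<Prod>i\<in>A \<inter> - {x. x \<in> E}. 1 - e)"
    unfolding W_def using assms(1) by (rule prod.If_cases)
  also have "A \<inter> {x. x \<in> E} = E" using assms by auto
  also have "A \<inter> - {x. x \<in> E} = A - E" by auto
  finally show ?thesis using assms by (simp add: card_Diff_subset finite_subset)
qed

lemma P_SC_zero: "P_SC m 0 = 0"
proof -
  have "(0::real) ^ card E * (1 - 0) ^ (m ^ m - card E) *
          (let u = (\<lambda>q. q \<in> S);
               y = (\<lambda>p. if p \<in> E then None else Some (spc_enc m m u p))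
           in if (\<exists>f. spc_sc_dec m m y = Some f \<and> (\<forall>q<(m - 1) ^ m. f q = u q)) then 0 else 1) = 0"
    if "E \<in> Pow {..<m ^ m}" for S E
  proof (cases "E = {}")
    case True
    obtain f where "spc_sc_dec m m (\<lambda>p. Some (spc_enc m m (\<lambda>q. q \<in> S) p)) = Some f"
       "\<forall>q<(m - 1) ^ m. f q = (q \<in> S)"
      using dec_correct[of m m "\<lambda>p. Some (spc_enc m m (\<lambda>q. q \<in> S) p)" "\<lambda>q. q \<in> S"] by auto
    then show ?thesis using True by (auto simp: Let_def)
  next
    case False
    then have "card E \<noteq> 0" using that finite_subset[of E "{..<m ^ m}"] by auto
    then show ?thesis by simp
  qed
  then show ?thesis unfolding P_SC_def Let_def by (simp add: sum.neutral)
qed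

lemma P_SC_lower:
  assumes m: "2 \<le> m" and e: "0 \<le> e" "e \<le> 1"
  shows "Pr (\<lambda>_. e) {..<m ^ m} (\<lambda>E. Cev m m (\<lambda>p. p \<in> E)) \<le> P_SC m e"
proof -
  define K where "K = (m - 1) ^ m"
  define N where "N = m ^ m"
  define T where "T = (\<lambda>S E. e ^ card E * (1 - e) ^ (N - card E) *
          (let u = (\<lambda>q. q \<in> S);
               y = (\<lambda>p. if p \<in> E then None else Some (spc_enc m m u p))
           in if (\<exists>f. spc_sc_dec m m y = Some f \<and> (\<forall>q<K. f q = u q)) then 0 else (1::real)))"
  have P: "P_SC m e = (1 / 2 ^ K) * (\<Sum>S\<in>Pow {..<K}. \<Sum>E\<in>Pow {..<N}. T S E)"
    unfolding P_SC_def T_def K_def N_def by (simp add: Let_def)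
  have le: "Pr (\<lambda>_. e) {..<N} (\<lambda>E. Cev m m (\<lambda>p. p \<in> E)) \<le> (\<Sum>E\<in>Pow {..<N}. T S E)" for S
    unfolding Pr_def
  proof (rule sum_mono)
    fix E assume E: "E \<in> Pow {..<N}"
    have w: "W (\<lambda>_. e) {..<N} E = e ^ card E * (1 - e) ^ (N - card E)"
      using E by (simp add: W_eq)
    have wn: "e ^ card E * (1 - e) ^ (N - card E) \<ge> 0" using e by simp
    show "W (\<lambda>_. e) {..<N} E * of_bool (Cev m m (\<lambda>p. p \<in> E)) \<le> T S E"
    proof (cases "Cev m m (\<lambda>p. p \<in> E)")
      case True
      have "Cev m m (\<lambda>p. (if p \<in> E then None else Some (spc_enc m m (\<lambda>q. q \<in> S) p)) = None)"
        using True by simp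
      then have "spc_sc_dec m m (\<lambda>p. if p \<in> E then None else Some (spc_enc m m (\<lambda>q. q \<in> S) p)) = None"
        using dec_None[OF m, of m "\<lambda>p. if p \<in> E then None else Some (spc_enc m m (\<lambda>q. q \<in> S) p)"] by simp
      then show ?thesis using True w by (simp add: T_def Let_def)
    next
      case False
      then show ?thesis using wn by (simp add: T_def Let_def)
    qed
  qed
  have "(\<Sum>S\<in>Pow {..<K}. Pr (\<lambda>_. e) {..<N} (\<lambda>E. Cev m m (\<lambda>p. p \<in> E))) \<le>
        (\<Sum>S\<in>Pow {..<K}. \<Sum>E\<in>Pow {..<N}. T S E)"
    by (rule sum_mono) (rule le)
  moreover have "(\<Sum>S\<in>Pow {..<K}. Pr (\<lambda>_. e) {..<N} (\<lambda>E. Cev m m (\<lambda>p. p \<in> E))) =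
      2 ^ K * Pr (\<lambda>_. e) {..<N} (\<lambda>E. Cev m m (\<lambda>p. p \<in> E))"
  proof -
    have c: "card (Pow {..<K}) = 2 ^ K" by (simp add: card_Pow)
    show ?thesis by (simp add: c)
  qed
  ultimately have "2 ^ K * Pr (\<lambda>_. e) {..<N} (\<lambda>E. Cev m m (\<lambda>p. p \<in> E)) \<le>
        (\<Sum>S\<in>Pow {..<K}. \<Sum>E\<in>Pow {..<N}. T S E)" by linarith
  then show ?thesis unfolding P N_def by (simp add: field_simps)
qed

lemma gfun_range:
  assumes "0 \<le> x" "x \<le> 1"
  shows "0 \<le> gfun m x \<and> gfun m x \<le> 1"
proof -
  have "0 \<le> (1 - x) ^ (m - 1)" "(1 - x) ^ (m - 1) \<le> 1" using assms by (auto intro: power_le_one)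
  then show ?thesis using assms unfolding gfun_def by (auto intro: mult_le_one)
qed

lemma iter_range:
  assumes "0 \<le> e" "e \<le> 1"
  shows "0 \<le> (gfun m ^^ k) e \<and> (gfun m ^^ k) e \<le> 1"
  using assms by (induction k) (auto dest: gfun_range)

lemma iter_bound:
  assumes e: "0 \<le> e" "e \<le> 1" and md: "real m * (1 - e / 2) ^ (m - 1) \<le> e / 2"
  shows "k \<le> m \<Longrightarrow> (gfun m ^^ k) e \<ge> e - real k * (1 - e / 2) ^ (m - 1)"
proof (induction k)
  case 0
  then show ?case by simp
next
  case (Suc k)
  define \<delta> where "\<delta> = (1 - e / 2) ^ (m - 1)"
  define x where "x = (gfun m ^^ k) e"
  have d0: "0 \<le> \<delta>" unfolding \<delta>_def using e by simp
  have x01: "0 \<le> x" "x \<le> 1" unfolding x_def using iter_range[OF e] by auto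
  have "x \<ge> e - real k * \<delta>" using Suc unfolding x_def \<delta>_def by simp
  moreover have "real k * \<delta> \<le> real m * \<delta>" using Suc.prems d0 by (intro mult_right_mono) auto
  ultimately have xe: "x \<ge> e / 2" using md unfolding \<delta>_def by linarith
  have t: "(1 - x) ^ (m - 1) \<le> \<delta>" unfolding \<delta>_def using xe x01 by (intro power_mono) auto
  have t0: "0 \<le> (1 - x) ^ (m - 1)" using x01 by simp
  have "x * (1 - x) ^ (m - 1) \<le> (1 - x) ^ (m - 1)" using x01 t0 by (simp add: mult_left_le_one_le)
  then have "gfun m x \<ge> x - \<delta>" using t unfolding gfun_def by (simp add: algebra_simps)
  moreover have "(gfun m ^^ Suc k) e = gfun m x" by (simp add: x_def)
  ultimately show ?case using \<open>x \<ge> e - real k * \<delta>\<close> unfolding \<delta>_def by (simp add: algebra_simps)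
qed

lemma eventually_small:
  assumes "0 < e" "e < 1"
  shows "eventually (\<lambda>m. real m * (1 - e / 2) ^ (m - 1) \<le> e / 2) sequentially"
proof -
  define r where "r = 1 - e / 2"
  have r: "0 < r" "r < 1" using assms by (auto simp: r_def)
  have "(\<lambda>n. of_nat n * r ^ n) \<longlonglongrightarrow> 0" using r by (intro powser_times_n_limit_0) simp
  then have "eventually (\<lambda>n. of_nat n * r ^ n < r * (e / 2)) sequentially"
    using r assms by (intro order_tendstoD(2)) auto
  then have "eventually (\<lambda>n. of_nat n * r ^ n < r * (e / 2) \<and> n \<ge> 1) sequentially"
    by (intro eventually_conj) (auto simp: eventually_ge_at_top)
  then show ?thesis
  proof (rule eventually_mono)
    fix n assume n: "of_nat n * r ^ n < r * (e / 2) \<and> n \<ge> 1"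
    then have "r ^ n = r * r ^ (n - 1)" by (cases n) auto
    then have "r * (of_nat n * r ^ (n - 1)) < r * (e / 2)" using n by (simp add: algebra_simps)
    then have "of_nat n * r ^ (n - 1) < e / 2" using r by simp
    then show "real n * (1 - e / 2) ^ (n - 1) \<le> e / 2" by (simp add: r_def)
  qed
qed

theorem theorem2:
  shows "SC_threshold P_SC = 0"
proof -
  have "{eps. 0 \<le> eps \<and> eps < 1 \<and> (\<lambda>m. P_SC m eps) \<longlonglongrightarrow> 0} = {0}"
  proof (intro equalityI subsetI)
    fix eps assume "eps \<in> {eps. 0 \<le> eps \<and> eps < 1 \<and> (\<lambda>m. P_SC m eps) \<longlonglongrightarrow> 0}"
    then have e: "0 \<le> eps" "eps < 1" and lim: "(\<lambda>m. P_SC m eps) \<longlonglongrightarrow> 0" by auto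
    show "eps \<in> {0}"
    proof (rule ccontr)
      assume "eps \<notin> {0}"
      then have ep: "0 < eps" using e by auto
      have ev1: "eventually (\<lambda>m. P_SC m eps < eps / 2) sequentially"
        using lim ep by (intro order_tendstoD(2)) auto
      have ev2: "eventually (\<lambda>m. P_SC m eps \<ge> eps / 2) sequentially"
      proof -
        have "eventually (\<lambda>m. real m * (1 - eps / 2) ^ (m - 1) \<le> eps / 2 \<and> m \<ge> 2) sequentially"
          using eventually_small[OF ep e(2)] by (intro eventually_conj) (auto simp: eventually_ge_at_top)
        then show ?thesis
        proof (rule eventually_mono)
          fix m assume m: "real m * (1 - eps / 2) ^ (m - 1) \<le> eps / 2 \<and> m \<ge> 2"
          have "eps / 2 \<le> eps - real m * (1 - eps / 2) ^ (m - 1)" using m by simp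
          also have "\<dots> \<le> (gfun m ^^ m) eps" using iter_bound[of eps m m] m e by simp
          also have "\<dots> = Pr (\<lambda>_. eps) {..<m ^ m} (\<lambda>E. Cev m m (\<lambda>p. p \<in> E))"
            using Pr_Cev[of m eps m] m by simp
          also have "\<dots> \<le> P_SC m eps" using P_SC_lower[of m eps] m e by simp
          finally show "P_SC m eps \<ge> eps / 2" .
        qed
      qed
      have "eventually (\<lambda>m. False) sequentially"
        using eventually_conj[OF ev1 ev2] by (rule eventually_mono) linarith
      then show False by simp
    qed
  next
    fix eps assume "eps \<in> {0::real}"
    then show "eps \<in> {eps. 0 \<le> eps \<and> eps < 1 \<and> (\<lambda>m. P_SC m eps) \<longlonglongrightarrow> 0}"
      by (simp add: P_SC_zero)
  qed
  then show ?thesis unfolding SC_threshold_def by simp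
qed

end
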